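(* Let $G$ be a finitely generated group in which every non-trivial element is a generalized torsion element. Then $G$ decomposes as a free product $G=A\ast B$ with $A$ and $B$ non-trivial if and only if $G$ is isomorphic to the infinite dihedral group $D_{\infty}=\mathbb{Z}_2\ast\mathbb{Z}_2$.
   Context: For $g,x$ in a group, $g^{x}:=xgx^{-1}$. A non-trivial element $g$ of a group $G$ is a generalized torsion element if there exist a positive integer $n$ and $x_1,\ldots,x_n\in G$ with $g^{x_1}g^{x_2}\cdots g^{x_n}=1$. $\mathbb{Z}_2$ denotes the cyclic group of order two. *)

theory Defs
  imports "HOL-Algebra.Algebra"
begin

definition conj_by :: "('g, 'b) monoid_scheme \<Rightarrow> 'g \<Rightarrow> 'g \<Rightarrow> 'g" where
  "conj_by G g x = x \<otimes>\<^bsub>G\<^esub> g \<otimes>\<^bsub>G\<^esub> inv\<^bsub>G\<^esub> x"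

definition list_prod :: "('g, 'b) monoid_scheme \<Rightarrow> 'g list \<Rightarrow> 'g" where
  "list_prod G xs = foldr (\<lambda>a b. a \<otimes>\<^bsub>G\<^esub> b) xs \<one>\<^bsub>G\<^esub>"

definition gen_torsion :: "('g, 'b) monoid_scheme \<Rightarrow> 'g \<Rightarrow> bool" where
  "gen_torsion G g \<longleftrightarrow> g \<in> carrier G \<and> g \<noteq> \<one>\<^bsub>G\<^esub> \<and>
     (\<exists>xs. xs \<noteq> [] \<and> set xs \<subseteq> carrier G \<and>
            list_prod G (map (conj_by G g) xs) = \<one>\<^bsub>G\<^esub>)"

definition fin_gen :: "('g, 'b) monoid_scheme \<Rightarrow> bool" where
  "fin_gen G \<longleftrightarrow> (\<exists>S. finite S \<and> S \<subseteq> carrier G \<and> generate G S = carrier G)"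

text \<open>Internal free product: G = A * B for subgroups A, B, i.e. A and B generate G and
  no non-empty reduced alternating word (letters tagged True from A - {1}, False from
  B - {1}, adjacent tags distinct) evaluates to 1.\<close>
definition free_product_decomp :: "('g, 'b) monoid_scheme \<Rightarrow> 'g set \<Rightarrow> 'g set \<Rightarrow> bool" where
  "free_product_decomp G A B \<longleftrightarrow>
     subgroup A G \<and> subgroup B G \<and> generate G (A \<union> B) = carrier G \<and>
     (\<forall>w :: (bool \<times> 'g) list.
        w \<noteq> [] \<and>
        (\<forall>p \<in> set w. snd p \<noteq> \<one>\<^bsub>G\<^esub> \<and> snd p \<in> (if fst p then A else B)) \<and>
        (\<forall>i. Suc i < length w \<longrightarrow> fst (w ! i) \<noteq> fst (w ! Suc i))
        \<longrightarrow> list_prod G (map snd w) \<noteq> \<one>\<^bsub>G\<^esub>)"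

text \<open>The infinite dihedral group, realised as the isometry group of Z:
  (s, a) stands for x \<mapsto> (-1)^s x + a, with composition as multiplication.\<close>
definition inf_dihedral :: "(bool \<times> int) monoid" where
  "inf_dihedral = \<lparr> carrier = UNIV,
     monoid.mult = (\<lambda>(s, a) (t, b). (s \<noteq> t, a + (if s then - b else b))),
     one = (False, 0) \<rparr>"

end

theory Submission
  imports Defs
begin

fun altw :: "(bool \<times> 'g) list \<Rightarrow> bool" where
  "altw [] = True" | "altw [x] = True" | "altw (x#y#w) = (fst x \<noteq> fst y \<and> altw (y#w))"

lemma altw_iff: "altw w \<longleftrightarrow> (\<forall>i. Suc i < length w \<longrightarrow> fst (w!i) \<noteq> fst (w!Suc i))"
proof (induction w rule: altw.induct)
  case (3 x y w)
  show ?case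
  proof
    assume "altw (x#y#w)"
    then show "\<forall>i. Suc i < length (x#y#w) \<longrightarrow> fst ((x#y#w)!i) \<noteq> fst ((x#y#w)!Suc i)"
      using 3 by (auto simp: nth_Cons split: nat.splits)
  next
    assume H: "\<forall>i. Suc i < length (x#y#w) \<longrightarrow> fst ((x#y#w)!i) \<noteq> fst ((x#y#w)!Suc i)"
    have "fst x \<noteq> fst y" using H[rule_format, of 0] by simp
    moreover have "\<forall>i. Suc i < length (y#w) \<longrightarrow> fst ((y#w)!i) \<noteq> fst ((y#w)!Suc i)"
      using H by (metis Suc_less_eq length_Cons nth_Cons_Suc)
    ultimately show "altw (x#y#w)" using 3 by simp
  qed
qed auto

lemma altw_Cons: "altw (x#w) \<longleftrightarrow> altw w \<and> (w \<noteq> [] \<longrightarrow> fst x \<noteq> fst (hd w))"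
  by (cases w) auto

lemma altw_append: "altw (L @ M) \<longleftrightarrow> altw L \<and> altw M \<and> (L \<noteq> [] \<longrightarrow> M \<noteq> [] \<longrightarrow> fst (last L) \<noteq> fst (hd M))"
  by (induction L rule: altw.induct) (auto simp: altw_Cons)

lemma altw_rev: "altw (rev w) \<longleftrightarrow> altw w"
  by (induction w) (auto simp: altw_append altw_Cons last_rev)

lemma altw_map: "(\<And>p. fst (f p) = fst p) \<Longrightarrow> altw (map f w) \<longleftrightarrow> altw w"
  by (induction w rule: altw.induct) auto

lemma list_prod_Cons: "list_prod G (x#xs) = x \<otimes>\<^bsub>G\<^esub> list_prod G xs"
  by (simp add: list_prod_def)
lemma list_prod_Nil: "list_prod G [] = \<one>\<^bsub>G\<^esub>"
  by (simp add: list_prod_def)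

lemma (in monoid) list_prod_carrier: "set xs \<subseteq> carrier G \<Longrightarrow> list_prod G xs \<in> carrier G"
  by (induction xs) (auto simp: list_prod_Cons list_prod_Nil)

lemma (in monoid) list_prod_append: "set xs \<subseteq> carrier G \<Longrightarrow> set ys \<subseteq> carrier G \<Longrightarrow>
   list_prod G (xs @ ys) = list_prod G xs \<otimes> list_prod G ys"
  by (induction xs) (auto simp: list_prod_Cons list_prod_Nil list_prod_carrier m_assoc)


locale fpd = group G for G :: "('g, 'b) monoid_scheme" (structure) +
  fixes A B :: "'g set"
  assumes fpd: "free_product_decomp G A B"
begin

definition okl :: "bool \<times> 'g \<Rightarrow> bool" where
  "okl p \<longleftrightarrow> snd p \<noteq> \<one> \<and> snd p \<in> (if fst p then A else B)"
definition red :: "(bool \<times> 'g) list \<Rightarrow> bool" where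
  "red w \<longleftrightarrow> (\<forall>p\<in>set w. okl p) \<and> altw w"
definition ev :: "(bool \<times> 'g) list \<Rightarrow> 'g" where
  "ev w = list_prod G (map snd w)"
definition winv :: "(bool \<times> 'g) list \<Rightarrow> (bool \<times> 'g) list" where
  "winv w = rev (map (\<lambda>p. (fst p, inv (snd p))) w)"

lemma subA: "subgroup A G" and subB: "subgroup B G"
  and gen: "generate G (A \<union> B) = carrier G"
  using fpd unfolding free_product_decomp_def by auto

lemma word_cond: "red w \<Longrightarrow> w \<noteq> [] \<Longrightarrow> ev w \<noteq> \<one>"
  using fpd unfolding free_product_decomp_def red_def okl_def ev_def altw_iff by blast

lemma okl_carrier: "okl p \<Longrightarrow> snd p \<in> carrier G"
  using subA subB unfolding okl_def by (auto simp: subgroup.mem_carrier split: if_splits)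

lemma red_carrier: "red w \<Longrightarrow> snd ` set w \<subseteq> carrier G"
  using okl_carrier unfolding red_def by auto

lemma okl_inv: "okl p \<Longrightarrow> okl (fst p, inv (snd p))"
  using subA subB okl_carrier[of p] unfolding okl_def
  by (auto simp: subgroup.m_inv_closed split: if_splits)

lemma red_Nil[simp]: "red []" by (simp add: red_def)

lemma red_append: "red (L @ M) \<longleftrightarrow> red L \<and> red M \<and> (L \<noteq> [] \<longrightarrow> M \<noteq> [] \<longrightarrow> fst (last L) \<noteq> fst (hd M))"
  unfolding red_def altw_append by auto

lemma red_Cons: "red (x # M) \<longleftrightarrow> okl x \<and> red M \<and> (M \<noteq> [] \<longrightarrow> fst x \<noteq> fst (hd M))"
  unfolding red_def altw_Cons by auto

lemma red_winv: "red w \<Longrightarrow> red (winv w)"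
  unfolding red_def winv_def using okl_inv by (auto simp: altw_rev altw_map)

lemma ev_Nil[simp]: "ev [] = \<one>" by (simp add: ev_def list_prod_Nil)
lemma ev_Cons: "ev (x # w) = snd x \<otimes> ev w" by (simp add: ev_def list_prod_Cons)

lemma ev_carrier: "snd ` set w \<subseteq> carrier G \<Longrightarrow> ev w \<in> carrier G"
  unfolding ev_def by (rule list_prod_carrier) simp

lemma ev_append: "snd ` set L \<subseteq> carrier G \<Longrightarrow> snd ` set M \<subseteq> carrier G \<Longrightarrow>
   ev (L @ M) = ev L \<otimes> ev M"
  unfolding ev_def by (simp add: list_prod_append)

lemma winv_append: "winv (L @ M) = winv M @ winv L" by (simp add: winv_def)
lemma winv_Nil[simp]: "winv [] = []" by (simp add: winv_def)
lemma winv_single: "winv [p] = [(fst p, inv (snd p))]" by (simp add: winv_def)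
lemma winv_Cons: "winv (p # w) = winv w @ [(fst p, inv (snd p))]" by (simp add: winv_def)

lemma winv_carrier: "snd ` set w \<subseteq> carrier G \<Longrightarrow> snd ` set (winv w) \<subseteq> carrier G"
  by (auto simp: winv_def)

lemma winv_winv: "snd ` set w \<subseteq> carrier G \<Longrightarrow> winv (winv w) = w"
  by (induction w) (auto simp: winv_def)

lemma ev_winv: "snd ` set w \<subseteq> carrier G \<Longrightarrow> ev (winv w) = inv (ev w)"
proof (induction w)
  case (Cons p w)
  have c: "snd p \<in> carrier G" "snd ` set w \<subseteq> carrier G" using Cons.prems by auto
  have "ev (winv (p#w)) = ev (winv w) \<otimes> inv (snd p)"
    using c by (simp add: winv_Cons ev_append winv_carrier ev_Cons)
  also have "\<dots> = inv (ev w) \<otimes> inv (snd p)" using Cons.IH c by simp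
  also have "\<dots> = inv (snd p \<otimes> ev w)" using c ev_carrier by (simp add: inv_mult_group)
  finally show ?case by (simp add: ev_Cons)
qed simp

lemma ev_cancel:
  assumes "snd ` set P \<subseteq> carrier G" "snd ` set Z \<subseteq> carrier G" "snd ` set Q \<subseteq> carrier G"
  shows "ev (P @ Z) \<otimes> ev (winv Z @ Q) = ev P \<otimes> ev Q"
proof -
  have cs: "ev P \<in> carrier G" "ev Z \<in> carrier G" "ev Q \<in> carrier G"
    using assms ev_carrier by auto
  have "ev (P @ Z) \<otimes> ev (winv Z @ Q) = ev P \<otimes> ev Z \<otimes> (inv (ev Z) \<otimes> ev Q)"
    using assms by (simp add: ev_append winv_carrier ev_winv)
  also have "\<dots> = ev P \<otimes> ev Q" using cs by (simp add: m_assoc[symmetric]) (simp add: m_assoc)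
  finally show ?thesis .
qed

end

context fpd begin

lemma decomp:
  assumes "red XX" "red YY"
  shows "\<exists>P Z Q R. XX = P @ Z \<and> YY = winv Z @ Q \<and> red R \<and> ev R = ev P \<otimes> ev Q \<and>
     (R = P @ Q \<or> (\<exists>P' Q' t c d. P = P' @ [(t,c)] \<and> Q = (t,d) # Q' \<and> R = P' @ [(t, c \<otimes> d)] @ Q'))"
  using assms
proof (induction XX arbitrary: YY rule: rev_induct)
  case Nil
  show ?case
    by (rule exI[of _ "[]"], rule exI[of _ "[]"], rule exI[of _ YY], rule exI[of _ YY])
       (use Nil ev_carrier red_carrier in auto)
next
  case (snoc x XX')
  have rX': "red XX'" and okx: "okl x" using snoc.prems red_append[of XX' "[x]"] by (auto simp: red_Cons)
  have cx: "snd x \<in> carrier G" using okx okl_carrier by auto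
  have cX': "snd ` set XX' \<subseteq> carrier G" using rX' red_carrier by auto
  show ?case
  proof (cases YY)
    case Nil
    show ?thesis
      by (rule exI[of _ "XX' @ [x]"], rule exI[of _ "[]"], rule exI[of _ "[]"], rule exI[of _ "XX' @ [x]"])
         (use Nil snoc.prems ev_carrier[OF red_carrier[OF snoc.prems(1)]] in auto)
  next
    case (Cons y YY')
    have rY': "red YY'" and oky: "okl y" using snoc.prems Cons by (auto simp: red_Cons)
    have cy: "snd y \<in> carrier G" using oky okl_carrier by auto
    have cY': "snd ` set YY' \<subseteq> carrier G" using rY' red_carrier by auto
    show ?thesis
    proof (cases "fst x = fst y")
      case False
      have "red ((XX' @ [x]) @ YY)" using snoc.prems Cons False by (subst red_append) auto
      moreover have "ev ((XX' @ [x]) @ YY) = ev (XX' @ [x]) \<otimes> ev YY"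
        using snoc.prems by (intro ev_append red_carrier) auto
      ultimately show ?thesis
        by (intro exI[of _ "XX' @ [x]"] exI[of _ "[]"] exI[of _ YY] exI[of _ "(XX' @ [x]) @ YY"]) auto
    next
      case True
      show ?thesis
      proof (cases "snd x \<otimes> snd y = \<one>")
        case False
        define R where "R = XX' @ [(fst x, snd x \<otimes> snd y)] @ YY'"
        have okm: "okl (fst x, snd x \<otimes> snd y)"
          using okx oky True False subA subB unfolding okl_def
          by (auto split: if_splits intro: subgroup.m_closed)
        have "red R" unfolding R_def using snoc.prems Cons okm True
          by (auto simp: red_append red_Cons)
        moreover have "ev R = ev (XX' @ [x]) \<otimes> ev YY"
          unfolding R_def Cons using cx cy cX' cY'
          by (simp add: ev_append ev_Cons ev_carrier m_assoc)
        moreover have "\<exists>P' Q' t c d. XX' @ [x] = P' @ [(t,c)] \<and> YY = (t,d) # Q' \<and> R = P' @ [(t, c \<otimes> d)] @ Q'"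
          unfolding R_def
          by (rule exI[where x=XX'], rule exI[where x=YY'], rule exI[where x="fst x"], rule exI[where x="snd x"], rule exI[where x="snd y"]) (use Cons True in \<open>cases x, cases y, auto\<close>)
        ultimately show ?thesis using Cons
          by (intro exI[of _ "XX' @ [x]"] exI[of _ "[]"] exI[of _ YY] exI[of _ R]) auto
      next
        case True2: True
        have yinv: "y = (fst x, inv (snd x))"
        proof -
          have "inv (snd y) = snd x" using True2 cx cy by (simp add: inv_equality)
          then have "snd y = inv (snd x)" using cy by (metis inv_inv)
          then show ?thesis using True by (cases x, cases y) auto
        qed
        obtain P Z Q R where H: "XX' = P @ Z" "YY' = winv Z @ Q" "red R" "ev R = ev P \<otimes> ev Q"
          "R = P @ Q \<or> (\<exists>P' Q' t c d. P = P' @ [(t,c)] \<and> Q = (t,d) # Q' \<and> R = P' @ [(t, c \<otimes> d)] @ Q')"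
          using snoc.IH[OF rX' rY'] by blast
        show ?thesis
          by (intro exI[of _ P] exI[of _ "Z @ [x]"] exI[of _ Q] exI[of _ R])
             (use H Cons yinv in \<open>auto simp: winv_append winv_single\<close>)
      qed
    qed
  qed
qed

end

context fpd begin

lemma uniq:
  assumes "red w1" "red w2" "ev w1 = ev w2"
  shows "w1 = w2"
proof -
  have c1: "snd ` set w1 \<subseteq> carrier G" and c2: "snd ` set w2 \<subseteq> carrier G"
    using assms red_carrier by auto
  obtain P Z Q R where H: "w1 = P @ Z" "winv w2 = winv Z @ Q" "red R" "ev R = ev P \<otimes> ev Q"
    "R = P @ Q \<or> (\<exists>P' Q' t c d. P = P' @ [(t,c)] \<and> Q = (t,d) # Q' \<and> R = P' @ [(t, c \<otimes> d)] @ Q')"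
    using decomp[OF assms(1) red_winv[OF assms(2)]] by blast
  have cP: "snd ` set P \<subseteq> carrier G" and cZ: "snd ` set Z \<subseteq> carrier G" using c1 H(1) by auto
  have cQ: "snd ` set Q \<subseteq> carrier G" using winv_carrier[OF c2] unfolding H(2) by auto
  have "ev P \<otimes> ev Q = ev w1 \<otimes> ev (winv w2)"
    using ev_cancel[OF cP cZ cQ] H(1,2) by simp
  also have "\<dots> = \<one>" using assms(3) ev_winv[OF c2] ev_carrier[OF c2] by simp
  finally have "ev R = \<one>" using H(4) by simp
  then have "R = []" using word_cond H(3) by blast
  then have "P = []" "Q = []" using H(5) by auto
  then have "w1 = Z" "winv w2 = winv Z" using H by auto
  then show ?thesis using winv_winv[OF c2] winv_winv[OF cZ] by metis
qed

lemma exist: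
  assumes "x \<in> carrier G"
  shows "\<exists>w. red w \<and> ev w = x"
proof -
  have "x \<in> generate G (A \<union> B)" using assms gen by simp
  then show ?thesis
  proof (induction rule: generate.induct)
    case one
    then show ?case by (intro exI[of _ "[]"]) simp
  next
    case (incl h)
    show ?case
    proof (cases "h = \<one>")
      case True then show ?thesis by (intro exI[of _ "[]"]) simp
    next
      case False
      define p where "p = (h \<in> A, h)"
      have "okl p" using incl False unfolding p_def okl_def by auto
      then have "red [p]" by (simp add: red_Cons)
      moreover have "ev [p] = h" using incl subA subB unfolding p_def
        by (auto simp: ev_Cons subgroup.mem_carrier)
      ultimately show ?thesis by blast
    qed
  next
    case (inv h)
    have hc: "h \<in> carrier G" using inv subA subB by (auto simp: subgroup.mem_carrier)
    show ?case
    proof (cases "h = \<one>")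
      case True then show ?thesis by (intro exI[of _ "[]"]) simp
    next
      case False
      define p where "p = (h \<in> A, inv h)"
      have "inv h \<noteq> \<one>" using False hc by (metis inv_one inv_inv one_closed)
      then have "okl p" using inv subA subB unfolding p_def okl_def by (auto simp: subgroup.m_inv_closed)
      then have "red [p]" by (simp add: red_Cons)
      moreover have "ev [p] = inv h" using hc unfolding p_def
        by (auto simp: ev_Cons)
      ultimately show ?thesis by blast
    qed
  next
    case (eng h1 h2)
    then obtain w1 w2 where w: "red w1" "ev w1 = h1" "red w2" "ev w2 = h2" by blast
    obtain P Z Q R where H: "w1 = P @ Z" "w2 = winv Z @ Q" "red R" "ev R = ev P \<otimes> ev Q"
      using decomp[OF w(1) w(3)] by blast
    have c1: "snd ` set w1 \<subseteq> carrier G" and c2: "snd ` set w2 \<subseteq> carrier G"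
      using w red_carrier by auto
    have cP: "snd ` set P \<subseteq> carrier G" and cZ: "snd ` set Z \<subseteq> carrier G" using c1 H(1) by auto
    have cQ: "snd ` set Q \<subseteq> carrier G" using c2 unfolding H(2) by auto
    have "ev R = h1 \<otimes> h2" using ev_cancel[OF cP cZ cQ] H w by simp
    then show ?case using H(3) by blast
  qed
qed

definition nf :: "'g \<Rightarrow> (bool \<times> 'g) list" where
  "nf x = (SOME w. red w \<and> ev w = x)"

lemma nf: "x \<in> carrier G \<Longrightarrow> red (nf x) \<and> ev (nf x) = x"
  unfolding nf_def by (rule someI_ex[OF exist])

lemma nf_ev: assumes "red w" shows "nf (ev w) = w"
proof -
  have "ev w \<in> carrier G" using ev_carrier red_carrier assms by blast
  then have "red (nf (ev w)) \<and> ev (nf (ev w)) = ev w" by (rule nf)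
  then show ?thesis using uniq assms by blast
qed

lemma nf_one: "nf \<one> = []"
  using nf_ev[of "[]"] by simp

end

fun cnt :: "'a list \<Rightarrow> 'a list \<Rightarrow> nat" where
  "cnt w [] = 0"
| "cnt w (x#L) = (if take (length w) (x#L) = w then 1 else 0) + cnt w L"

lemma cnt_le_len_app: "cnt w (L @ M) \<le> length L + cnt w M"
  by (induction L) auto

lemma take_app_eq: "length w \<le> length L \<Longrightarrow> take (length w) (L @ M) = take (length w) L"
  by simp

lemma take_eq_len: "take n L = w \<Longrightarrow> length w \<le> length L"
  by auto

lemma cnt_app_ge: "cnt w L + cnt w M \<le> cnt w (L @ M)"
proof (induction L)
  case (Cons x L)
  have "take (length w) (x#L) = w \<Longrightarrow> take (length w) (x#L@M) = w"
    using take_app_eq[of w "x#L" M] take_eq_len[of "length w" "x#L" w] by simp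
  then show ?case using Cons by auto
qed simp

lemma cnt_app_le: "cnt w (L @ M) \<le> cnt w L + cnt w M + length w"
proof (induction L)
  case (Cons x L)
  show ?case
  proof (cases "length w \<le> length (x#L)")
    case True
    then have "take (length w) (x#L@M) = take (length w) (x#L)"
      using take_app_eq[of w "x#L" M] by simp
    then show ?thesis using Cons by simp
  next
    case False
    have "cnt w ((x#L) @ M) \<le> length (x#L) + cnt w M" by (rule cnt_le_len_app)
    then show ?thesis using False by simp
  qed
qed simp

lemma cnt_single: "2 \<le> length w \<Longrightarrow> cnt w [p] = 0"
proof -
  assume "2 \<le> length w"
  moreover have "length (take (length w) [p]) \<le> 1" by simp
  ultimately have "take (length w) [p] \<noteq> w" by auto
  then show ?thesis by simp
qed

context fpd begin

definition psi :: "(bool \<times> 'g) list \<Rightarrow> (bool \<times> 'g) list \<Rightarrow> int" where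
  "psi w L = int (cnt w L) - int (cnt w (winv L))"

lemma psi_app:
  "psi w L + psi w M - 2 * int (length w) \<le> psi w (L @ M) \<and>
   psi w (L @ M) \<le> psi w L + psi w M + 2 * int (length w)"
proof -
  have "cnt w L + cnt w M \<le> cnt w (L @ M)" "cnt w (L @ M) \<le> cnt w L + cnt w M + length w"
    "cnt w (winv M) + cnt w (winv L) \<le> cnt w (winv M @ winv L)"
    "cnt w (winv M @ winv L) \<le> cnt w (winv M) + cnt w (winv L) + length w"
    by (rule cnt_app_ge cnt_app_le)+
  then show ?thesis unfolding psi_def winv_append by linarith
qed

lemma psi_single: assumes "2 \<le> length w" shows "psi w [p] = 0"
proof -
  have "cnt w [p] = 0" "cnt w [(fst p, inv (snd p))] = 0" using cnt_single[OF assms] by blast+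
  then show ?thesis unfolding psi_def winv_single by (simp only:)
qed

lemma psi_winv: "snd ` set L \<subseteq> carrier G \<Longrightarrow> psi w (winv L) = - psi w L"
  unfolding psi_def using winv_winv by simp

lemma psi_Nil[simp]: "psi w [] = 0" by (simp add: psi_def)

definition phi :: "(bool \<times> 'g) list \<Rightarrow> 'g \<Rightarrow> int" where
  "phi w x = psi w (nf x)"

lemma phi_one[simp]: "phi w \<one> = 0" by (simp add: phi_def nf_one)

lemma defect:
  assumes "2 \<le> length w" "x \<in> carrier G" "y \<in> carrier G"
  shows "phi w x + phi w y - 12 * int (length w) \<le> phi w (x \<otimes> y) \<and>
         phi w (x \<otimes> y) \<le> phi w x + phi w y + 12 * int (length w)"
proof -
  have nx: "red (nf x)" "ev (nf x) = x" and ny: "red (nf y)" "ev (nf y) = y"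
    using nf assms by auto
  obtain P Z Q R where H: "nf x = P @ Z" "nf y = winv Z @ Q" "red R" "ev R = ev P \<otimes> ev Q"
    "R = P @ Q \<or> (\<exists>P' Q' t c d. P = P' @ [(t,c)] \<and> Q = (t,d) # Q' \<and> R = P' @ [(t, c \<otimes> d)] @ Q')"
    using decomp[OF nx(1) ny(1)] by blast
  have c1: "snd ` set (nf x) \<subseteq> carrier G" and c2: "snd ` set (nf y) \<subseteq> carrier G"
    using nx ny red_carrier by auto
  have cP: "snd ` set P \<subseteq> carrier G" and cZ: "snd ` set Z \<subseteq> carrier G" using c1 H(1) by auto
  have cQ: "snd ` set Q \<subseteq> carrier G" using c2 unfolding H(2) by auto
  have "ev R = x \<otimes> y" using ev_cancel[OF cP cZ cQ] H nx ny by simp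
  then have nR: "nf (x \<otimes> y) = R" using nf_ev[OF H(3)] by simp
  define K where "K = 2 * int (length w)"
  have app: "\<And>L M. psi w L + psi w M - K \<le> psi w (L @ M) \<and> psi w (L @ M) \<le> psi w L + psi w M + K"
    using psi_app unfolding K_def by blast
  have a1: "psi w P + psi w Z - K \<le> phi w x \<and> phi w x \<le> psi w P + psi w Z + K"
    using app[of P Z] H(1) unfolding phi_def by simp
  have a2: "psi w Q - psi w Z - K \<le> phi w y \<and> phi w y \<le> psi w Q - psi w Z + K"
    using app[of "winv Z" Q] H(2) psi_winv[OF cZ] unfolding phi_def by simp
  from H(5) show ?thesis
  proof
    assume "R = P @ Q"
    then have "psi w P + psi w Q - K \<le> phi w (x \<otimes> y) \<and> phi w (x \<otimes> y) \<le> psi w P + psi w Q + K"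
      using app[of P Q] nR unfolding phi_def by simp
    then show ?thesis using a1 a2 unfolding K_def by linarith
  next
    assume "\<exists>P' Q' t c d. P = P' @ [(t,c)] \<and> Q = (t,d) # Q' \<and> R = P' @ [(t, c \<otimes> d)] @ Q'"
    then obtain P' Q' t c d where E: "P = P' @ [(t,c)]" "Q = [(t,d)] @ Q'" "R = P' @ ([(t, c \<otimes> d)] @ Q')"
      by auto
    have s: "\<And>p. psi w [p] = 0" using psi_single assms(1) by blast
    have b1: "psi w P' - K \<le> psi w P \<and> psi w P \<le> psi w P' + K" using app[of P' "[(t,c)]"] E(1) s by simp
    have b2: "psi w Q' - K \<le> psi w Q \<and> psi w Q \<le> psi w Q' + K" using app[of "[(t,d)]" Q'] E(2) s by simp
    have b3: "psi w Q' - K \<le> psi w ([(t, c \<otimes> d)] @ Q') \<and> psi w ([(t, c \<otimes> d)] @ Q') \<le> psi w Q' + K"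
      using app[of "[(t, c \<otimes> d)]" Q'] s by simp
    have b4: "psi w P' + psi w ([(t, c \<otimes> d)] @ Q') - K \<le> phi w (x \<otimes> y) \<and>
              phi w (x \<otimes> y) \<le> psi w P' + psi w ([(t, c \<otimes> d)] @ Q') + K"
      using app[of P' "[(t, c \<otimes> d)] @ Q'"] E(3) nR unfolding phi_def by simp
    show ?thesis using a1 a2 b1 b2 b3 b4 unfolding K_def by linarith
  qed
qed

lemma conj_carrier: "g \<in> carrier G \<Longrightarrow> x \<in> carrier G \<Longrightarrow> conj_by G g x \<in> carrier G"
  unfolding conj_by_def by simp

lemma conj_bound:
  assumes "2 \<le> length w" "g \<in> carrier G" "x \<in> carrier G"
  shows "phi w g - 36 * int (length w) \<le> phi w (conj_by G g x)"
proof -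
  have ix: "inv x \<in> carrier G" using assms by simp
  have "phi w x + phi w (inv x) \<ge> phi w (x \<otimes> inv x) - 12 * int (length w)"
    using defect[OF assms(1,3) ix] by linarith
  then have e1: "phi w x + phi w (inv x) \<ge> - 12 * int (length w)" using assms by simp
  have e2: "phi w (x \<otimes> g) \<ge> phi w x + phi w g - 12 * int (length w)"
    using defect[OF assms(1,3,2)] by linarith
  have e3: "phi w (x \<otimes> g \<otimes> inv x) \<ge> phi w (x \<otimes> g) + phi w (inv x) - 12 * int (length w)"
    using defect[OF assms(1) _ ix, of "x \<otimes> g"] assms by simp
  show ?thesis using e1 e2 e3 unfolding conj_by_def by linarith
qed

lemma prod_bound:
  assumes "2 \<le> length w" "g \<in> carrier G" "set xs \<subseteq> carrier G"
  shows "int (length xs) * (phi w g - 48 * int (length w)) \<le> phi w (list_prod G (map (conj_by G g) xs))"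
  using assms(3)
proof (induction xs)
  case Nil
  then show ?case by (simp add: list_prod_Nil)
next
  case (Cons x xs)
  define E where "E = phi w g - 48 * int (length w)"
  have cx: "x \<in> carrier G" and cxs: "set xs \<subseteq> carrier G" using Cons.prems by auto
  have cr: "list_prod G (map (conj_by G g) xs) \<in> carrier G"
    using cxs assms(2) conj_carrier by (intro list_prod_carrier) auto
  have cc: "conj_by G g x \<in> carrier G" using conj_carrier assms(2) cx by blast
  have "phi w (conj_by G g x \<otimes> list_prod G (map (conj_by G g) xs)) \<ge>
        phi w (conj_by G g x) + phi w (list_prod G (map (conj_by G g) xs)) - 12 * int (length w)"
    using defect[OF assms(1) cc cr] by linarith
  moreover have "phi w (conj_by G g x) \<ge> phi w g - 36 * int (length w)"
    using conj_bound[OF assms(1,2) cx] .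
  moreover have "int (length xs) * E \<le> phi w (list_prod G (map (conj_by G g) xs))"
    using Cons.IH cxs unfolding E_def by simp
  moreover have "int (length (x#xs)) * E = E + int (length xs) * E" by (simp add: algebra_simps)
  ultimately show ?case unfolding E_def by (simp add: list_prod_Cons)
qed

lemma not_gen_torsion:
  assumes "2 \<le> length w" "g \<in> carrier G" "phi w g > 48 * int (length w)"
  shows "\<not> gen_torsion G g"
proof
  assume "gen_torsion G g"
  then obtain xs where xs: "xs \<noteq> []" "set xs \<subseteq> carrier G" "list_prod G (map (conj_by G g) xs) = \<one>"
    unfolding gen_torsion_def by blast
  have "int (length xs) * (phi w g - 48 * int (length w)) \<le> 0"
    using prod_bound[OF assms(1,2) xs(2)] xs(3) by simp
  moreover have "int (length xs) * (phi w g - 48 * int (length w)) > 0"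
    using xs(1) assms(3) by simp
  ultimately show False by simp
qed

end

lemma concat_replicate_snoc: "concat (replicate k V) @ V = V @ concat (replicate k V)"
  by (induction k) auto

context fpd begin

lemma exists_ngt:
  assumes x1: "x1 \<in> A" "x1 \<noteq> \<one>" and x2: "x2 \<in> A" "x2 \<noteq> \<one>" and x3: "x3 \<in> A" "x3 \<noteq> \<one>"
    and y: "y \<in> B" "y \<noteq> \<one>"
    and c1: "\<not> (inv x3 = x1 \<and> inv y = y \<and> inv x2 = x2)"
    and c2: "\<not> (inv x2 = x1 \<and> inv y = y \<and> inv x1 = x2)"
    and c3: "\<not> (inv x1 = x1 \<and> inv y = y \<and> inv x3 = x2)"
  shows "\<exists>g\<in>carrier G. g \<noteq> \<one> \<and> \<not> gen_torsion G g"
proof -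
  define U where "U = [(True,x1),(False,y),(True,x2),(False,y),(True,x3),(False,y)]"
  define w where "w = [(True,x1),(False,y),(True,x2)]"
  define V where "V = [(False, inv y),(True, inv x3),(False, inv y),(True, inv x2),(False, inv y),(True, inv x1)]"
  define W where "W k = concat (replicate k U)" for k
  have okU: "okl (True,x1)" "okl (True,x2)" "okl (True,x3)" "okl (False,y)"
    using x1 x2 x3 y unfolding okl_def by auto
  have redU: "red U" unfolding U_def using okU by (simp add: red_Cons)
  have redW: "red (W k) \<and> (W k \<noteq> [] \<longrightarrow> fst (hd (W k)))" for k
  proof (induction k)
    case 0 then show ?case by (simp add: W_def)
  next
    case (Suc k)
    have "W (Suc k) = U @ W k" by (simp add: W_def)
    moreover have "red (U @ W k)" using Suc redU unfolding red_append by (simp add: U_def)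
    ultimately show ?case by (simp add: U_def)
  qed
  have cntW: "k \<le> cnt w (W k)" for k
  proof (induction k)
    case (Suc k)
    have "cnt w U + cnt w (W k) \<le> cnt w (U @ W k)" by (rule cnt_app_ge)
    moreover have "1 \<le> cnt w U" by (simp add: U_def w_def)
    ultimately show ?case using Suc by (simp add: W_def)
  qed simp
  have cU: "snd ` set U \<subseteq> carrier G"
    using redU red_carrier by blast
  have winvU: "winv U = V" using cU unfolding U_def V_def by (simp add: winv_def)
  have winvW: "winv (W k) = concat (replicate k V)" for k
  proof (induction k)
    case (Suc k)
    have "winv (W (Suc k)) = winv (W k) @ winv U" by (simp add: W_def winv_append)
    then show ?case using Suc winvU by (simp add: concat_replicate_snoc)
  qed (simp add: W_def)
  have skipV: "cnt w (V @ M) = cnt w M" if "M = [] \<or> (\<exists>M'. M = (False, inv y) # (True, inv x3) # M')" for M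
    using that c1 c2 c3 unfolding V_def w_def by auto
  have cntV: "cnt w (concat (replicate k V)) = 0" for k
  proof (induction k)
    case (Suc k)
    have "concat (replicate k V) = [] \<or> (\<exists>M'. concat (replicate k V) = (False, inv y) # (True, inv x3) # M')"
      by (cases k) (auto simp: V_def)
    then show ?case using Suc skipV by simp
  qed simp
  define k :: nat where "k = 145"
  define g where "g = ev (W k)"
  have rW: "red (W k)" using redW by blast
  have nW: "W k \<noteq> []" unfolding k_def W_def U_def by simp
  have gc: "g \<in> carrier G" unfolding g_def using rW red_carrier ev_carrier by blast
  have g1: "g \<noteq> \<one>" unfolding g_def using word_cond rW nW by blast
  have "phi w g = int (cnt w (W k)) - int (cnt w (winv (W k)))"
    unfolding phi_def psi_def g_def nf_ev[OF rW] by simp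
  also have "\<dots> \<ge> int k" using cntW[of k] winvW cntV by simp
  finally have "phi w g > 48 * int (length w)" unfolding k_def w_def by simp
  moreover have "2 \<le> length w" unfolding w_def by simp
  ultimately have "\<not> gen_torsion G g" using not_gen_torsion[OF _ gc] by blast
  then show ?thesis using gc g1 by blast
qed

end

lemma D_mult: "(s, a) \<otimes>\<^bsub>inf_dihedral\<^esub> (t, b) = (s \<noteq> t, a + (if s then - b else b))"
  by (simp add: inf_dihedral_def)
lemma D_one: "\<one>\<^bsub>inf_dihedral\<^esub> = (False, 0)"
  by (simp add: inf_dihedral_def)
lemma D_carrier[simp]: "carrier inf_dihedral = UNIV"
  by (simp add: inf_dihedral_def)

lemma group_D: "group inf_dihedral"
proof (rule groupI)
  fix x y z :: "bool \<times> int"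
  show "x \<otimes>\<^bsub>inf_dihedral\<^esub> y \<otimes>\<^bsub>inf_dihedral\<^esub> z = x \<otimes>\<^bsub>inf_dihedral\<^esub> (y \<otimes>\<^bsub>inf_dihedral\<^esub> z)"
    by (cases x, cases y, cases z) (auto simp: D_mult)
  show "\<one>\<^bsub>inf_dihedral\<^esub> \<otimes>\<^bsub>inf_dihedral\<^esub> x = x"
    by (cases x) (simp add: D_mult D_one)
  show "\<exists>y\<in>carrier inf_dihedral. y \<otimes>\<^bsub>inf_dihedral\<^esub> x = \<one>\<^bsub>inf_dihedral\<^esub>"
  proof (cases x)
    case (Pair s a)
    show ?thesis
      by (rule bexI[of _ "(s, if s then a else - a)"]) (auto simp: Pair D_mult D_one)
  qed
qed auto

definition mu :: "bool \<Rightarrow> bool \<times> int" where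
  "mu b = (if b then (True, 0) else (True, 1))"

fun altl :: "bool \<Rightarrow> nat \<Rightarrow> bool list" where
  "altl h 0 = []" | "altl h (Suc n) = h # altl (\<not> h) n"

definition fv :: "bool \<Rightarrow> nat \<Rightarrow> int" where
  "fv h n = (if h then - int (n div 2) else int ((n + 1) div 2))"

lemma dprod_altl: "list_prod inf_dihedral (map mu (altl h n)) = (odd n, fv h n)"
proof (induction n arbitrary: h)
  case 0 then show ?case by (simp add: list_prod_Nil D_one fv_def)
next
  case (Suc n)
  show ?case
  proof (cases h)
    case True
    then show ?thesis using Suc[of "\<not> h"] by (simp add: list_prod_Cons mu_def D_mult fv_def)
  next
    case False
    have e: "int ((Suc n + 1) div 2) = 1 + int (n div 2)" by simp
    show ?thesis using Suc[of "\<not> h"] False by (simp add: list_prod_Cons mu_def D_mult fv_def e)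
  qed
qed

lemma dnz: "(odd n, fv h n) = (False, 0) \<Longrightarrow> n = 0"
  by (auto simp: fv_def split: if_splits)

lemma dsurj: "\<exists>h n. d = (odd n, fv h n)"
proof (cases d)
  case (Pair s a)
  show ?thesis
  proof (cases s)
    case True
    show ?thesis
    proof (cases "a \<le> 0")
      case True
      then show ?thesis using \<open>s\<close> Pair
        by (intro exI[of _ True] exI[of _ "2 * nat (- a) + 1"]) (auto simp: fv_def)
    next
      case False
      then show ?thesis using \<open>s\<close> Pair
        by (intro exI[of _ False] exI[of _ "2 * nat (a - 1) + 1"]) (auto simp: fv_def)
    qed
  next
    case False
    show ?thesis
    proof (cases "a \<le> 0")
      case True
      then show ?thesis using \<open>\<not> s\<close> Pair
        by (intro exI[of _ True] exI[of _ "2 * nat (- a)"]) (auto simp: fv_def)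
    next
      case False
      then show ?thesis using \<open>\<not> s\<close> Pair
        by (intro exI[of _ False] exI[of _ "2 * nat a"]) (auto simp: fv_def)
    qed
  qed
qed

lemma altw_altl: "altw w \<Longrightarrow> map fst w = altl (fst (hd w)) (length w)"
  by (induction w rule: altw.induct) auto

lemma altl_Nil_iff: "altl h n = [] \<longleftrightarrow> n = 0" by (cases n) auto

lemma altw_of_altl0: "altw (map f (altl h n)) \<and> (n > 0 \<longrightarrow> fst (hd (map f (altl h n))) = h)"
  if "\<And>b. fst (f b) = b"
proof (induction n arbitrary: h)
  case (Suc n)
  then show ?case using Suc.IH[of "\<not> h"] that[of h] by (auto simp: altw_Cons altl_Nil_iff)
qed simp

lemma altw_of_altl: "(\<And>b. fst (f b) = b) \<Longrightarrow> altw (map f (altl h n))"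
  using altw_of_altl0 by blast

lemma D_involution_prod: "set L \<subseteq> range mu \<Longrightarrow>
   list_prod inf_dihedral L \<otimes>\<^bsub>inf_dihedral\<^esub> list_prod inf_dihedral (rev L) = (False, 0)"
proof (induction L)
  case Nil then show ?case by (simp add: list_prod_Nil D_one D_mult)
next
  case (Cons x L)
  interpret D: group inf_dihedral by (rule group_D)
  have xx: "x \<otimes>\<^bsub>inf_dihedral\<^esub> x = \<one>\<^bsub>inf_dihedral\<^esub>"
    using Cons.prems by (auto simp: mu_def D_mult D_one)
  have "list_prod inf_dihedral (x # L) \<otimes>\<^bsub>inf_dihedral\<^esub> list_prod inf_dihedral (rev (x # L))
      = x \<otimes>\<^bsub>inf_dihedral\<^esub> (list_prod inf_dihedral L \<otimes>\<^bsub>inf_dihedral\<^esub> list_prod inf_dihedral (rev L)) \<otimes>\<^bsub>inf_dihedral\<^esub> x"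
    by (simp add: list_prod_Cons D.list_prod_append list_prod_Nil D.m_assoc)
  also have "\<dots> = (False, 0)" using Cons xx by (simp add: D_one[symmetric])
  finally show ?case .
qed


context fpd begin

lemma iso_D:
  assumes AB: "A = {\<one>, s}" "B = {\<one>, t}" and st: "s \<noteq> \<one>" "t \<noteq> \<one>"
  shows "G \<cong> inf_dihedral"
proof -
  interpret D: group inf_dihedral by (rule group_D)
  have sc: "s \<in> carrier G" using subA AB by (auto simp: subgroup.mem_carrier)
  have tc: "t \<in> carrier G" using subB AB by (auto simp: subgroup.mem_carrier)
  have ss: "s \<otimes> s = \<one>"
  proof -
    have "s \<in> A" using AB by simp
    then have "s \<otimes> s \<in> A" using subgroup.m_closed[OF subA] by blast
    then have "s \<otimes> s \<in> {\<one>, s}" using AB(1) by simp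
    moreover have "s \<otimes> s \<noteq> s" using sc st by (metis l_cancel_one' )
    ultimately show ?thesis by blast
  qed
  have tt: "t \<otimes> t = \<one>"
  proof -
    have "t \<in> B" using AB by simp
    then have "t \<otimes> t \<in> B" using subgroup.m_closed[OF subB] by blast
    then have "t \<otimes> t \<in> {\<one>, t}" using AB(2) by simp
    moreover have "t \<otimes> t \<noteq> t" using tc st by (metis l_cancel_one')
    ultimately show ?thesis by blast
  qed
  have oklD: "okl p \<Longrightarrow> snd p = (if fst p then s else t)" for p
    using AB unfolding okl_def by (auto split: if_splits)
  define f where "f x = list_prod inf_dihedral (map mu (map fst (nf x)))" for x
  have fhom: "f (x \<otimes> y) = f x \<otimes>\<^bsub>inf_dihedral\<^esub> f y" if xy: "x \<in> carrier G" "y \<in> carrier G" for x y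
  proof -
    have nx: "red (nf x)" "ev (nf x) = x" and ny: "red (nf y)" "ev (nf y) = y"
      using nf xy by auto
    obtain P Z Q R where H: "nf x = P @ Z" "nf y = winv Z @ Q" "red R" "ev R = ev P \<otimes> ev Q"
      "R = P @ Q \<or> (\<exists>P' Q' t c d. P = P' @ [(t,c)] \<and> Q = (t,d) # Q' \<and> R = P' @ [(t, c \<otimes> d)] @ Q')"
      using decomp[OF nx(1) ny(1)] by blast
    have c1: "snd ` set (nf x) \<subseteq> carrier G" and c2: "snd ` set (nf y) \<subseteq> carrier G"
      using nx ny red_carrier by auto
    have cP: "snd ` set P \<subseteq> carrier G" and cZ: "snd ` set Z \<subseteq> carrier G" using c1 H(1) by auto
    have cQ: "snd ` set Q \<subseteq> carrier G" using c2 unfolding H(2) by auto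
    have "ev R = x \<otimes> y" using ev_cancel[OF cP cZ cQ] H nx ny by simp
    then have nR: "nf (x \<otimes> y) = R" using nf_ev[OF H(3)] by simp
    have RPQ: "R = P @ Q"
    proof (rule ccontr)
      assume "R \<noteq> P @ Q"
      then obtain P' Q' t0 c d where E: "P = P' @ [(t0,c)]" "Q = (t0,d) # Q'" "R = P' @ [(t0, c \<otimes> d)] @ Q'"
        using H(5) by blast
      have "okl (t0, c)" using nx(1) H(1) E(1) unfolding red_def by auto
      moreover have "okl (t0, d)" using ny(1) H(2) E(2) unfolding red_def by auto
      moreover have "okl (t0, c \<otimes> d)" using H(3) E(3) unfolding red_def by auto
      ultimately show False using oklD[of "(t0,c)"] oklD[of "(t0,d)"] ss tt unfolding okl_def
        by (auto split: if_splits)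
    qed
    define mP where "mP = list_prod inf_dihedral (map mu (map fst P))"
    define mQ where "mQ = list_prod inf_dihedral (map mu (map fst Q))"
    define mZ where "mZ = list_prod inf_dihedral (map mu (map fst Z))"
    define mZ' where "mZ' = list_prod inf_dihedral (rev (map mu (map fst Z)))"
    have fxy: "f (x \<otimes> y) = mP \<otimes>\<^bsub>inf_dihedral\<^esub> mQ"
      unfolding f_def nR RPQ mP_def mQ_def by (simp add: D.list_prod_append)
    have fx: "f x = mP \<otimes>\<^bsub>inf_dihedral\<^esub> mZ"
      unfolding f_def H(1) mP_def mZ_def by (simp add: D.list_prod_append)
    have wf: "map fst (winv Z) = rev (map fst Z)" by (simp add: winv_def rev_map)
    have fy: "f y = mZ' \<otimes>\<^bsub>inf_dihedral\<^esub> mQ"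
      unfolding f_def H(2) mZ'_def mQ_def by (simp add: D.list_prod_append wf rev_map)
    have zz: "mZ \<otimes>\<^bsub>inf_dihedral\<^esub> mZ' = \<one>\<^bsub>inf_dihedral\<^esub>"
      unfolding mZ_def mZ'_def D_one by (rule D_involution_prod) auto
    have "f x \<otimes>\<^bsub>inf_dihedral\<^esub> f y = mP \<otimes>\<^bsub>inf_dihedral\<^esub> (mZ \<otimes>\<^bsub>inf_dihedral\<^esub> mZ') \<otimes>\<^bsub>inf_dihedral\<^esub> mQ"
      unfolding fx fy by (simp add: D.m_assoc)
    also have "\<dots> = f (x \<otimes> y)" unfolding zz fxy by simp
    finally show ?thesis by simp
  qed
  have fh: "f \<in> hom G inf_dihedral" unfolding hom_def using fhom by auto
  interpret fg: group_hom G inf_dihedral f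
    by (simp add: group_hom_def group_hom_axioms_def fh group_D is_group)
  have nf_fst: "red w \<Longrightarrow> list_prod inf_dihedral (map mu (map fst w)) = (odd (length w), fv (fst (hd w)) (length w))" for w
    using altw_altl[of w] dprod_altl unfolding red_def by simp
  have ker: "kernel G inf_dihedral f = {\<one>}"
  proof -
    have "x = \<one>" if "x \<in> carrier G" "f x = (False, 0)" for x
    proof -
      have n: "red (nf x)" "ev (nf x) = x" using nf that by auto
      have "(odd (length (nf x)), fv (fst (hd (nf x))) (length (nf x))) = (False, 0)"
        using that(2) nf_fst[OF n(1)] unfolding f_def by simp
      then have "nf x = []" using dnz by blast
      then show ?thesis using n by simp
    qed
    then show ?thesis unfolding kernel_def D_one by (auto simp: D_one)
  qed
  have inj: "inj_on f (carrier G)" using fg.inj_iff_trivial_ker ker by simp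
  have surj: "f ` carrier G = UNIV"
  proof -
    have "d \<in> f ` carrier G" for d
    proof -
      obtain h n where d: "d = (odd n, fv h n)" using dsurj by blast
      define w0 where "w0 = map (\<lambda>b. (b, if b then s else t)) (altl h n)"
      have "okl (b, if b then s else t)" for b using AB st unfolding okl_def by auto
      then have rw: "red w0" unfolding red_def w0_def using altw_of_altl[of "\<lambda>b. (b, if b then s else t)"] by auto
      have mf: "map fst w0 = altl h n" unfolding w0_def by (simp add: comp_def)
      have "f (ev w0) = d" unfolding f_def nf_ev[OF rw] mf d by (rule dprod_altl)
      moreover have "ev w0 \<in> carrier G" using rw red_carrier ev_carrier by blast
      ultimately show ?thesis by blast
    qed
    then show ?thesis by auto
  qed
  have "f \<in> iso G inf_dihedral"
    by (rule isoI[OF fh]) (simp add: bij_betw_def inj surj)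
  then show ?thesis by (rule is_isoI)
qed

end

lemma fpd_swap:
  assumes "free_product_decomp G A B"
  shows "free_product_decomp G B A"
proof -
  have H: "subgroup A G" "subgroup B G" "generate G (A \<union> B) = carrier G"
    "\<And>w :: (bool \<times> _) list. w \<noteq> [] \<Longrightarrow>
        (\<forall>p \<in> set w. snd p \<noteq> \<one>\<^bsub>G\<^esub> \<and> snd p \<in> (if fst p then A else B)) \<Longrightarrow>
        (\<forall>i. Suc i < length w \<longrightarrow> fst (w ! i) \<noteq> fst (w ! Suc i))
        \<Longrightarrow> list_prod G (map snd w) \<noteq> \<one>\<^bsub>G\<^esub>"
    using assms unfolding free_product_decomp_def by blast+
  show ?thesis unfolding free_product_decomp_def
  proof (intro conjI allI impI)
    show "generate G (B \<union> A) = carrier G" using H(3) by (simp add: Un_commute)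
  next
    fix w :: "(bool \<times> _) list"
    assume a: "w \<noteq> [] \<and> (\<forall>p \<in> set w. snd p \<noteq> \<one>\<^bsub>G\<^esub> \<and> snd p \<in> (if fst p then B else A)) \<and>
        (\<forall>i. Suc i < length w \<longrightarrow> fst (w ! i) \<noteq> fst (w ! Suc i))"
    define w' where "w' = map (\<lambda>p. (\<not> fst p, snd p)) w"
    have "list_prod G (map snd w') \<noteq> \<one>\<^bsub>G\<^esub>"
      by (rule H(4)) (use a in \<open>auto simp: w'_def\<close>)
    moreover have "map snd w' = map snd w" by (simp add: w'_def)
    ultimately show "list_prod G (map snd w) \<noteq> \<one>\<^bsub>G\<^esub>" by simp
  qed (use H in auto)
qed

context fpd begin

lemma inv_self: "x \<in> carrier G \<Longrightarrow> x \<otimes> x = \<one> \<Longrightarrow> inv x = x"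
  using inv_equality by blast

lemma self_inv: "x \<in> carrier G \<Longrightarrow> inv x = x \<Longrightarrow> x \<otimes> x = \<one>"
  by (metis r_inv)

lemma big_factor_false:
  assumes "B \<noteq> {\<one>}" "\<forall>g\<in>carrier G. g \<noteq> \<one> \<longrightarrow> gen_torsion G g"
    and "(\<exists>a\<in>A. a \<otimes> a \<noteq> \<one>) \<or> (\<exists>a1\<in>A. \<exists>a2\<in>A. a1 \<noteq> \<one> \<and> a2 \<noteq> \<one> \<and> a1 \<noteq> a2)"
  shows False
proof -
  obtain b where b: "b \<in> B" "b \<noteq> \<one>" using assms(1) subgroup.one_closed[OF subB] by blast
  have Ac: "x \<in> A \<Longrightarrow> x \<in> carrier G" for x using subA by (rule subgroup.mem_carrier)
  have bc: "b \<in> carrier G" using b subB by (simp add: subgroup.mem_carrier)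
  have ex: "\<exists>g\<in>carrier G. g \<noteq> \<one> \<and> \<not> gen_torsion G g"
  proof (cases "\<exists>a\<in>A. a \<otimes> a \<noteq> \<one>")
    case True
    then obtain a where a: "a \<in> A" "a \<otimes> a \<noteq> \<one>" by blast
    have ac: "a \<in> carrier G" using Ac a by blast
    have a1: "a \<noteq> \<one>" using a ac by auto
    have "inv a \<noteq> a" using self_inv[OF ac] a by blast
    then show ?thesis using exists_ngt[OF a(1) a1 a(1) a1 a(1) a1 b] by blast
  next
    case False
    then have inv: "x \<in> A \<Longrightarrow> inv x = x" for x using inv_self Ac by blast
    obtain a1 a2 where a: "a1 \<in> A" "a2 \<in> A" "a1 \<noteq> \<one>" "a2 \<noteq> \<one>" "a1 \<noteq> a2"
      using assms(3) False by blast
    have c: "a1 \<in> carrier G" "a2 \<in> carrier G" using a Ac by auto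
    have a3: "a1 \<otimes> a2 \<in> A" using a subgroup.m_closed[OF subA] by blast
    have a31: "a1 \<otimes> a2 \<noteq> \<one>"
    proof
      assume "a1 \<otimes> a2 = \<one>"
      then have "inv a2 = a1" using c inv_equality by blast
      then show False using inv[OF a(2)] a(5) by simp
    qed
    have n1: "a1 \<otimes> a2 \<noteq> a1" using c a(4) by simp
    have n2: "a1 \<otimes> a2 \<noteq> a2" using c a(3) by simp
    show ?thesis
      by (rule exists_ngt[OF a(1) a(3) a(2) a(4) a3 a31 b])
         (use inv a a3 n1 n2 in auto)
  qed
  then show False using assms(2) by blast
qed

end

lemma (in group) two_subgroup:
  assumes "e \<in> carrier G" "e \<otimes> e = \<one>"
  shows "subgroup {\<one>, e} G"
proof -
  have "inv e = e" using assms inv_equality by blast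
  then show ?thesis unfolding subgroup_def using assms by auto
qed

lemma hom_list_prod:
  assumes "group G" "group H" "f \<in> hom G H" "set L \<subseteq> carrier G"
  shows "f (list_prod G L) = list_prod H (map f L)"
  using assms(4)
proof (induction L)
  case Nil
  interpret gh: group_hom G H f using assms by (simp add: group_hom_def group_hom_axioms_def)
  show ?case by (simp add: list_prod_Nil)
next
  case (Cons x L)
  interpret G: group G by fact
  have "list_prod G L \<in> carrier G" using Cons.prems G.list_prod_carrier by auto
  then show ?case using Cons hom_mult[OF assms(3)] by (simp add: list_prod_Cons)
qed

lemma (in group) list_prod_generate:
  "set L \<subseteq> generate G S \<Longrightarrow> list_prod G L \<in> generate G S"
  by (induction L) (auto simp: list_prod_Nil list_prod_Cons intro: generate.one generate.eng)

theorem theorem1p6: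
  fixes G :: "('g, 'b) monoid_scheme"
  assumes "group G"
    and "fin_gen G"
    and "\<forall>g \<in> carrier G. g \<noteq> \<one>\<^bsub>G\<^esub> \<longrightarrow> gen_torsion G g"
  shows "(\<exists>A B. free_product_decomp G A B \<and> A \<noteq> {\<one>\<^bsub>G\<^esub>} \<and> B \<noteq> {\<one>\<^bsub>G\<^esub>})
         \<longleftrightarrow> G \<cong> inf_dihedral"
proof
  assume "\<exists>A B. free_product_decomp G A B \<and> A \<noteq> {\<one>\<^bsub>G\<^esub>} \<and> B \<noteq> {\<one>\<^bsub>G\<^esub>}"
  then obtain A B where F: "free_product_decomp G A B" "A \<noteq> {\<one>\<^bsub>G\<^esub>}" "B \<noteq> {\<one>\<^bsub>G\<^esub>}" by blast
  interpret F1: fpd G A B using assms(1) F(1) by (simp add: fpd_def fpd_axioms_def)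
  interpret F2: fpd G B A using assms(1) fpd_swap[OF F(1)] by (simp add: fpd_def fpd_axioms_def)
  have nA: "\<not> ((\<exists>a\<in>A. a \<otimes>\<^bsub>G\<^esub> a \<noteq> \<one>\<^bsub>G\<^esub>) \<or> (\<exists>a1\<in>A. \<exists>a2\<in>A. a1 \<noteq> \<one>\<^bsub>G\<^esub> \<and> a2 \<noteq> \<one>\<^bsub>G\<^esub> \<and> a1 \<noteq> a2))"
    using F1.big_factor_false[OF F(3) assms(3)] by blast
  have nB: "\<not> ((\<exists>a\<in>B. a \<otimes>\<^bsub>G\<^esub> a \<noteq> \<one>\<^bsub>G\<^esub>) \<or> (\<exists>a1\<in>B. \<exists>a2\<in>B. a1 \<noteq> \<one>\<^bsub>G\<^esub> \<and> a2 \<noteq> \<one>\<^bsub>G\<^esub> \<and> a1 \<noteq> a2))"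
    using F2.big_factor_false[OF F(2) assms(3)] by blast
  obtain s where s: "s \<in> A" "s \<noteq> \<one>\<^bsub>G\<^esub>" using F(2) subgroup.one_closed[OF F1.subA] by blast
  obtain t where t: "t \<in> B" "t \<noteq> \<one>\<^bsub>G\<^esub>" using F(3) subgroup.one_closed[OF F1.subB] by blast
  have "A = {\<one>\<^bsub>G\<^esub>, s}" using nA s subgroup.one_closed[OF F1.subA] by blast
  moreover have "B = {\<one>\<^bsub>G\<^esub>, t}" using nB t subgroup.one_closed[OF F1.subB] by blast
  ultimately show "G \<cong> inf_dihedral" using F1.iso_D s(2) t(2) by blast
next
  assume "G \<cong> inf_dihedral"
  then obtain h where h: "h \<in> iso G inf_dihedral" unfolding is_iso_def by blast
  interpret G: group G by fact
  have gD: "group inf_dihedral" by (rule group_D)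
  define h' where "h' = inv_into (carrier G) h"
  have h'i: "h' \<in> iso inf_dihedral G" unfolding h'_def by (rule G.iso_set_sym[OF h])
  have hh: "h \<in> hom G inf_dihedral" using h by (simp add: iso_iff)
  have hh': "h' \<in> hom inf_dihedral G" using h'i by (simp add: iso_iff)
  have hsurj: "h ` carrier G = UNIV" using h by (simp add: iso_iff)
  have hinj: "inj_on h (carrier G)" using h by (simp add: iso_iff)
  interpret gh: group_hom G inf_dihedral h using hh gD by (simp add: group_hom_def group_hom_axioms_def)
  interpret gh': group_hom inf_dihedral G h' using hh' gD by (simp add: group_hom_def group_hom_axioms_def)
  have h'c: "h' d \<in> carrier G" for d using hh' by (auto simp: hom_def)
  have hh'd: "h (h' d) = d" for d unfolding h'_def using hsurj by (simp add: f_inv_into_f)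
  define s where "s = h' (True, 0)"
  define t where "t = h' (True, 1)"
  have sc: "s \<in> carrier G" and tc: "t \<in> carrier G" unfolding s_def t_def by (rule h'c)+
  have ss: "s \<otimes>\<^bsub>G\<^esub> s = \<one>\<^bsub>G\<^esub>"
    unfolding s_def using gh'.hom_mult[of "(True,0)" "(True,0)"] by (simp add: D_mult D_one[symmetric])
  have tt: "t \<otimes>\<^bsub>G\<^esub> t = \<one>\<^bsub>G\<^esub>"
    unfolding t_def using gh'.hom_mult[of "(True,1)" "(True,1)"] by (simp add: D_mult D_one[symmetric])
  have s1: "s \<noteq> \<one>\<^bsub>G\<^esub>"
  proof
    assume "s = \<one>\<^bsub>G\<^esub>"
    then have "h s = (False, 0)" by (simp add: D_one)
    then show False using hh'd unfolding s_def by simp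
  qed
  have t1: "t \<noteq> \<one>\<^bsub>G\<^esub>"
  proof
    assume "t = \<one>\<^bsub>G\<^esub>"
    then have "h t = (False, 0)" by (simp add: D_one)
    then show False using hh'd unfolding t_def by simp
  qed
  define A where "A = {\<one>\<^bsub>G\<^esub>, s}"
  define B where "B = {\<one>\<^bsub>G\<^esub>, t}"
  have mus: "h' (mu b) = (if b then s else t)" for b unfolding mu_def s_def t_def by simp
  have "free_product_decomp G A B"
    unfolding free_product_decomp_def
  proof (intro conjI allI impI)
    show "subgroup A G" unfolding A_def by (rule G.two_subgroup[OF sc ss])
    show "subgroup B G" unfolding B_def by (rule G.two_subgroup[OF tc tt])
    show "generate G (A \<union> B) = carrier G"
    proof
      show "generate G (A \<union> B) \<subseteq> carrier G" using sc tc unfolding A_def B_def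
        by (intro G.generate_incl) auto
      show "carrier G \<subseteq> generate G (A \<union> B)"
      proof
        fix g assume g: "g \<in> carrier G"
        obtain hb n where d: "h g = (odd n, fv hb n)" using dsurj by blast
        have "h g = list_prod inf_dihedral (map mu (altl hb n))" using d dprod_altl by simp
        then have "h' (h g) = list_prod G (map h' (map mu (altl hb n)))"
          using hom_list_prod[OF gD assms(1) hh'] by simp
        moreover have "h' (h g) = g" unfolding h'_def using g hinj by (simp add: inv_into_f_f)
        moreover have "set (map h' (map mu (altl hb n))) \<subseteq> generate G (A \<union> B)"
          using mus unfolding A_def B_def by (auto intro: generate.incl)
        ultimately show "g \<in> generate G (A \<union> B)" using G.list_prod_generate by metis
      qed
    qed
  next
    fix w :: "(bool \<times> 'g) list"
    assume a: "w \<noteq> [] \<and> (\<forall>p \<in> set w. snd p \<noteq> \<one>\<^bsub>G\<^esub> \<and> snd p \<in> (if fst p then A else B)) \<and>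
        (\<forall>i. Suc i < length w \<longrightarrow> fst (w ! i) \<noteq> fst (w ! Suc i))"
    have sn: "snd p = h' (mu (fst p))" if "p \<in> set w" for p
      using a that mus unfolding A_def B_def by (auto split: if_splits)
    then have ms: "map snd w = map h' (map mu (map fst w))" by auto
    have aw: "altw w" using a by (simp add: altw_iff)
    have "set (map snd w) \<subseteq> carrier G" using sn h'c by (metis (no_types, lifting) imageE set_map subsetI)
    then have "h (list_prod G (map snd w)) = list_prod inf_dihedral (map h (map snd w))"
      using hom_list_prod[OF assms(1) gD hh] by blast
    also have "map h (map snd w) = map mu (map fst w)" using ms hh'd by simp
    also have "list_prod inf_dihedral (map mu (map fst w)) = (odd (length w), fv (fst (hd w)) (length w))"
      using altw_altl[OF aw] dprod_altl by simp
    finally have e: "h (list_prod G (map snd w)) = (odd (length w), fv (fst (hd w)) (length w))" .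
    show "list_prod G (map snd w) \<noteq> \<one>\<^bsub>G\<^esub>"
    proof
      assume "list_prod G (map snd w) = \<one>\<^bsub>G\<^esub>"
      then have "(odd (length w), fv (fst (hd w)) (length w)) = (False, 0)" using e by (simp add: D_one)
      then have "length w = 0" by (rule dnz)
      then show False using a by simp
    qed
  qed
  moreover have "A \<noteq> {\<one>\<^bsub>G\<^esub>}" "B \<noteq> {\<one>\<^bsub>G\<^esub>}" using s1 t1 unfolding A_def B_def by auto
  ultimately show "\<exists>A B. free_product_decomp G A B \<and> A \<noteq> {\<one>\<^bsub>G\<^esub>} \<and> B \<noteq> {\<one>\<^bsub>G\<^esub>}" by blast
qed


end
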